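(* There is a deterministic algorithm ($1$-Cover) which, given $n \ge 81$ elements, makes at most $3 n^{3/2}$ comparisons and outputs a $1$-max-set of size at most $\sqrt{n}$.
   Context: Model of imprecise comparisons: there are $n$ elements, each with a fixed unknown real value; we identify an element with its value. Asked to compare $x_i$ and $x_j$, the comparator answers either "$x_i \ge x_j$" or "$x_j \ge x_i$". If $|x_i-x_j|>1$ the answer is correct; if $|x_i-x_j|\le 1$ the answer is arbitrary (possibly adversarial and adaptive). Let $x^*$ be the maximum value of an input element. A $k$-max-set is a subset of the input elements containing at least one element of value at least $x^*-k$. Bounds on comparisons are worst case over inputs and comparator behaviours, and the guarantee must hold for all of them. *)

theory Defs
  imports Complex_Main
begin

text \<open>A deterministic comparison algorithm on n elements (indexed 0..n-1) is a
finite decision tree.  Node Cmp i j ge le asks to compare elements i and j;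
the subtree ge is followed if the comparator answers "x_i >= x_j",
the subtree le if it answers "x_j >= x_i".\<close>

datatype dtree = Leaf "nat set" | Cmp nat nat dtree dtree

fun wf_tree :: "nat \<Rightarrow> dtree \<Rightarrow> bool" where
  "wf_tree n (Leaf S) = True"
| "wf_tree n (Cmp i j t1 t2) = (i < n \<and> j < n \<and> wf_tree n t1 \<and> wf_tree n t2)"

text \<open>Imprecise comparator: the answer "x_i >= x_j" is admissible unless it is
wrong by more than 1, i.e. iff x_j - x_i <= 1 (if |x_i - x_j| > 1 the answer
must be correct, otherwise it is arbitrary).  Since the comparator may be
adaptive and adversarial, all admissible answer sequences must be considered.
runs x t is the set of all (output, number of comparisons made) pairs of
executions of t on input values x under some admissible comparator behaviour.\<close>
fun runs :: "(nat \<Rightarrow> real) \<Rightarrow> dtree \<Rightarrow> (nat set \<times> nat) set" where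
  "runs x (Leaf S) = {(S, 0)}"
| "runs x (Cmp i j t1 t2) =
     (if x j - x i \<le> 1 then (\<lambda>(S, k). (S, Suc k)) ` runs x t1 else {}) \<union>
     (if x i - x j \<le> 1 then (\<lambda>(S, k). (S, Suc k)) ` runs x t2 else {})"

definition max_val :: "nat \<Rightarrow> (nat \<Rightarrow> real) \<Rightarrow> real" where
  "max_val n x = Max (x ` {..<n})"

definition is_max_set :: "real \<Rightarrow> nat \<Rightarrow> (nat \<Rightarrow> real) \<Rightarrow> nat set \<Rightarrow> bool" where
  "is_max_set k n x S \<longleftrightarrow> S \<subseteq> {..<n} \<and> (\<exists>i\<in>S. x i \<ge> max_val n x - k)"

end

theory Submission
  imports Defs
begin

function simb :: "nat \<Rightarrow> nat \<Rightarrow> nat \<Rightarrow> nat \<Rightarrow> nat \<Rightarrow> nat" where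
 "simb s q k p r = (if k+p+r \<le> s then k+p+r else if 0<r \<and> p<q then simb s q k (min q (p+r)) (r - (min q (p+r) - p))
    else if p = 0 then k+p+r else simb s q (k+1) (p - 1 - p div 2) r)"
  by auto
termination by (relation "measure (\<lambda>(s,q,k,p,r). 2*r+p)") auto
declare simb.simps[simp del]

lemma simb_step:
  assumes "\<not> k+p+r \<le> s" "0<r" "p<q"
  shows "simb s q k (p+1) (r-1) = simb s q k p r"
proof -
  have R: "simb s q k p r = simb s q k (min q (p+r)) (r - (min q (p+r) - p))"
    using assms by (subst simb.simps) auto
  show ?thesis
  proof (cases "0 < r-1 \<and> p+1 < q")
    case True
    then show ?thesis using assms R
      by (subst simb.simps) (auto simp: min_def)
  next
    case False
    then have "min q (p+r) = p+1" "r - (min q (p+r) - p) = r - 1" using assms by (auto simp: min_def)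
    then show ?thesis using R by simp
  qed
qed

lemma simb_end:
  "p < 2^e \<Longrightarrow> k + e \<le> s \<Longrightarrow> simb s q k p 0 \<le> s"
proof (induction e arbitrary: k p)
  case 0
  then show ?case by (subst simb.simps) auto
next
  case (Suc e)
  show ?case
  proof (cases "k+p \<le> s")
    case True then show ?thesis by (subst simb.simps) auto
  next
    case False
    then have p0: "p \<noteq> 0" using Suc.prems by auto
    have "simb s q k p 0 = simb s q (k+1) (p - 1 - p div 2) 0"
      using False p0 by (subst simb.simps) auto
    moreover have "p - 1 - p div 2 < 2^e" using Suc.prems(1) by auto
    ultimately show ?thesis using Suc.IH[of "p - 1 - p div 2" "k+1"] Suc.prems by simp
  qed
qed

definition J :: "nat \<Rightarrow> nat \<Rightarrow> nat" where
  "J q u = (if u < q then 0 else (u - q) div (1 + q div 2) + 1)"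

lemma simb_phase:
  "p \<le> q \<Longrightarrow> 1 \<le> q \<Longrightarrow> q \<le> 2^e \<Longrightarrow> k + J q (p+r) + e \<le> s \<Longrightarrow> simb s q k p r \<le> s"
proof (induction s q k p r rule: simb.induct)
  case (1 s q k p r)
  show ?case
  proof (cases "k+p+r \<le> s")
    case True then show ?thesis by (subst simb.simps) auto
  next
    case nle: False
    show ?thesis
    proof (cases "0<r \<and> p<q")
      case True
      have e: "simb s q k p r = simb s q k (min q (p+r)) (r - (min q (p+r) - p))"
        using nle True by (subst simb.simps) auto
      have "simb s q k (min q (p+r)) (r - (min q (p+r) - p)) \<le> s"
        apply (rule "1.IH"(1)[OF nle True])
        using "1.prems" True by (auto simp: min_def add.commute)
      then show ?thesis using e by simp
    next
      case nadd: False
      show ?thesis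
      proof (cases "p = 0")
        case True
        then have "r = 0" using nadd "1.prems" by auto
        then show ?thesis using True nle "1.prems" by (auto simp: J_def)
      next
        case p0: False
        have e: "simb s q k p r = simb s q (k+1) (p - 1 - p div 2) r"
          using nle nadd p0 by (subst simb.simps) auto
        show ?thesis
        proof (cases "p < q")
          case True
          then have "r = 0" using nadd by auto
          then have "J q (p + r) = 0" using True by (simp add: J_def)
          then show ?thesis using \<open>r = 0\<close>
            simb_end[of p e k s q] "1.prems" \<open>p<q\<close> by simp
        next
          case False
          then have pq: "p = q" using "1.prems" by auto
          have JJ: "k + 1 + J q (p - 1 - p div 2 + r) = k + J q (p + r)"
          proof (cases "r < 1 + q div 2")
            case True
            have "q div 2 + 1 \<le> q" using "1.prems" by linarith
            then show ?thesis using pq True by (auto simp: J_def)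
          next
            case False
            have "(r - (1 + q div 2)) div (1 + q div 2) + 1 = r div (1 + q div 2)"
              using False by (simp add: le_div_geq)
            moreover have "q div 2 + 1 \<le> q" using "1.prems" by linarith
            moreover have "q - Suc (q div 2) + r - q = r - Suc (q div 2)" using calculation(2) False by linarith
            ultimately show ?thesis using pq False by (auto simp: J_def)
          qed
          have "simb s q (k+1) (p - 1 - p div 2) r \<le> s"
            apply (rule "1.IH"(2)[OF nle nadd p0])
            using "1.prems" JJ by auto
          then show ?thesis using e by simp
        qed
      qed
    qed
  qed
qed

lemma pow_bound: "6 \<le> a \<Longrightarrow> 9*a+7 \<le> (2::nat)^a"
proof (induction a rule: dec_induct)
  case base then show ?case by simp
next
  case (step a) then show ?case by simp
qed

lemma simb_large:
  assumes s18: "18 \<le> s" and lo: "s*s \<le> n" and hi: "n < (s+1)*(s+1)"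
  shows "simb s (3*s+1) 0 0 n \<le> s"
proof -
  define e where "e = s div 3"
  have em: "e*3 + s mod 3 = s" unfolding e_def by (rule div_mult_mod_eq)
  have "s mod 3 < 3" by simp
  then have e1: "3*e \<le> s" "s \<le> 3*e + 2" using em by arith+
  then have "s \<le> 3*e + 2" by simp
  moreover have "6 \<le> e" using e1 s18 by arith
  ultimately have qe: "3*s+1 \<le> 2^e" using pow_bound[of e] by linarith
  define a where "a = s - e"
  define b where "b = 1 + (3*s+1) div 2"
  have a3: "2*s \<le> 3*a" unfolding a_def using e1 by arith
  have b2: "3*s \<le> 2*b"
  proof -
    have h: "\<And>d m. d*2 + m = 3*s+1 \<Longrightarrow> m < 2 \<Longrightarrow> 3*s \<le> 2*(1+d)" by arith
    show ?thesis unfolding b_def by (rule h[OF div_mult_mod_eq]) simp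
  qed
  have "(2*s)*(3*s) \<le> (3*a)*(2*b)" using mult_le_mono[OF a3 b2] .
  then have "6*(s*s) \<le> 6*(a*b)" by (simp add: algebra_simps)
  then have ab: "s*s \<le> a*b" by simp
  have "18*s \<le> s*s" using s18 by (rule mult_le_mono1)
  then have nq: "3*s+1 \<le> n" using lo s18 by linarith
  have "n - (3*s+1) < s*s" using hi nq by (simp add: algebra_simps)
  then have "n - (3*s+1) < a*b" using ab by linarith
  then have "(n - (3*s+1)) div b < a" using less_mult_imp_div_less by (metis mult.commute)
  moreover have "\<not> n < 3*s+1" using nq by simp
  ultimately have "J (3*s+1) n + e \<le> s" unfolding J_def b_def[symmetric] using a_def e1
    by simp
  then show ?thesis using simb_phase[of 0 "3*s+1" e 0 n s] qe by simp
qed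


definition chk :: "nat \<Rightarrow> bool" where
 "chk s = (\<forall>n\<in>set [s^2..<(s+1)^2]. simb s (3*s+1) 0 0 n \<le> s)"

lemma chk_small: "\<forall>s\<in>set [9..<18]. chk s" by code_simp

lemma simb_all:
  assumes "81 \<le> n" "s*s \<le> n" "n < (s+1)*(s+1)"
  shows "simb s (3*s+1) 0 0 n \<le> s"
proof (cases "18 \<le> s")
  case True then show ?thesis using simb_large assms by blast
next
  case False
  have "9 \<le> s"
  proof (rule ccontr)
    assume "\<not> 9 \<le> s"
    then have "s+1 \<le> 9" by simp
    then have "(s+1)*(s+1) \<le> 9*9" using mult_le_mono by blast
    then show False using assms by simp
  qed
  then have "s \<in> set [9..<18]" using False by (simp only: set_upt atLeastLessThan_iff) simp
  then have "chk s" using chk_small by blast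
  moreover have "n \<in> set [s^2..<(s+1)^2]" using assms by (simp add: power2_eq_square del: upt_Suc)
  ultimately show ?thesis unfolding chk_def by blast
qed


fun addcmp :: "nat \<Rightarrow> nat list \<Rightarrow> (nat\<times>nat) set \<Rightarrow> ((nat\<times>nat) set \<Rightarrow> dtree) \<Rightarrow> dtree" where
  "addcmp y [] W k = k W"
| "addcmp y (z#zs) W k = Cmp y z (addcmp y zs (insert (y,z) W) k) (addcmp y zs (insert (z,y) W) k)"

lemma runs_Cmp:
  "(S,c) \<in> runs x (Cmp i j t1 t2) \<Longrightarrow> (\<exists>c'. c = Suc c' \<and> ((x j - x i \<le> 1 \<and> (S,c') \<in> runs x t1) \<or> (x i - x j \<le> 1 \<and> (S,c') \<in> runs x t2)))"
  by (auto split: if_splits)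

lemma addcmp_runs:
  "(S,c) \<in> runs x (addcmp y zs W k) \<Longrightarrow> \<exists>W' c'. c = c' + length zs \<and> (S,c') \<in> runs x (k W') \<and> W \<subseteq> W'
     \<and> (\<forall>(a,b)\<in>W'. (a,b) \<in> W \<or> x b - x a \<le> 1) \<and> (\<forall>z\<in>set zs. (y,z)\<in>W' \<or> (z,y)\<in>W')"
proof (induction zs arbitrary: W c)
  case Nil
  then show ?case by auto
next
  case (Cons z zs)
  from runs_Cmp[OF Cons.prems[unfolded addcmp.simps]] obtain c' where c: "c = Suc c'" and
    br: "(x z - x y \<le> 1 \<and> (S,c') \<in> runs x (addcmp y zs (insert (y,z) W) k)) \<or>
         (x y - x z \<le> 1 \<and> (S,c') \<in> runs x (addcmp y zs (insert (z,y) W) k))" by blast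
  from br show ?case
  proof
    assume h: "x z - x y \<le> 1 \<and> (S,c') \<in> runs x (addcmp y zs (insert (y,z) W) k)"
    then obtain W' c'' where "c' = c'' + length zs" "(S,c'') \<in> runs x (k W')" "insert (y,z) W \<subseteq> W'"
      "\<forall>(a,b)\<in>W'. (a,b) \<in> insert (y,z) W \<or> x b - x a \<le> 1" "\<forall>z\<in>set zs. (y,z)\<in>W' \<or> (z,y)\<in>W'"
      using Cons.IH[OF conjunct2[OF h]] by blast
    then show ?thesis using c h by (intro exI[of _ W'] exI[of _ c'']) auto
  next
    assume h: "x y - x z \<le> 1 \<and> (S,c') \<in> runs x (addcmp y zs (insert (z,y) W) k)"
    then obtain W' c'' where "c' = c'' + length zs" "(S,c'') \<in> runs x (k W')" "insert (z,y) W \<subseteq> W'"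
      "\<forall>(a,b)\<in>W'. (a,b) \<in> insert (z,y) W \<or> x b - x a \<le> 1" "\<forall>z\<in>set zs. (y,z)\<in>W' \<or> (z,y)\<in>W'"
      using Cons.IH[OF conjunct2[OF h]] by blast
    then show ?thesis using c h by (intro exI[of _ W'] exI[of _ c'']) auto
  qed
qed

lemma addcmp_wf:
  "y < n \<Longrightarrow> set zs \<subseteq> {..<n} \<Longrightarrow> (\<forall>W. wf_tree n (k W)) \<Longrightarrow> wf_tree n (addcmp y zs W k)"
  by (induction zs arbitrary: W) auto

definition vic :: "nat set \<Rightarrow> (nat\<times>nat) set \<Rightarrow> nat \<Rightarrow> nat set" where
  "vic P W w = {b\<in>P. b \<noteq> w \<and> (w,b) \<in> W}"

lemma tournament:
  assumes fin: "finite P" and ne: "P \<noteq> {}" and comp: "\<forall>a\<in>P. \<forall>b\<in>P. a \<noteq> b \<longrightarrow> (a,b)\<in>W \<or> (b,a)\<in>W"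
  shows "\<exists>w\<in>P. card P \<le> 2 * card (vic P W w) + 1"
proof (rule ccontr)
  assume "\<not> ?thesis"
  then have lt: "\<forall>w\<in>P. 2 * card (vic P W w) + 2 \<le> card P" by (auto simp: not_le)
  define A where "A = Sigma P (vic P W)"
  define D where "D = {(a,b). a\<in>P \<and> b\<in>P \<and> a\<noteq>b}"
  have finv: "\<forall>a\<in>P. finite (vic P W a)" using fin unfolding vic_def by auto
  have cA: "card A = (\<Sum>a\<in>P. card (vic P W a))" unfolding A_def using fin finv by simp
  have "(\<Sum>a\<in>P. 2 * card (vic P W a) + 2) \<le> (\<Sum>a\<in>P. card P)" using lt by (intro sum_mono) auto
  moreover have "(\<Sum>a\<in>P. 2 * card (vic P W a) + 2) = (\<Sum>a\<in>P. 2 * card (vic P W a)) + (\<Sum>a\<in>P. 2)"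
    by (rule sum.distrib)
  moreover have "(\<Sum>a\<in>P. 2 * card (vic P W a)) = 2 * (\<Sum>a\<in>P. card (vic P W a))"
    by (rule sum_distrib_left[symmetric])
  ultimately have s1: "2 * card A + 2 * card P \<le> card P * card P"
    using cA by simp
  have finA: "finite A" unfolding A_def using fin finv by auto
  have "D \<subseteq> A \<union> prod.swap ` A"
  proof
    fix d assume "d \<in> D"
    then obtain a b where d: "d = (a,b)" "a \<in> P" "b \<in> P" "a \<noteq> b" unfolding D_def by auto
    show "d \<in> A \<union> prod.swap ` A"
    proof (cases "(a,b) \<in> W")
      case True
      then have "d \<in> A" using d unfolding A_def vic_def by auto
      then show ?thesis by blast
    next
      case False
      then have "(b,a) \<in> A" using d comp unfolding A_def vic_def by auto
      moreover have "d = prod.swap (b,a)" using d by simp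
      ultimately show ?thesis by blast
    qed
  qed
  then have "card D \<le> card (A \<union> prod.swap ` A)" using finA by (intro card_mono) auto
  also have "\<dots> \<le> card A + card (prod.swap ` A)" by (rule card_Un_le)
  also have "\<dots> \<le> card A + card A" using card_image_le[OF finA, of prod.swap] by simp
  finally have cD: "card D \<le> 2 * card A" by simp
  have "P \<times> P \<subseteq> D \<union> (\<lambda>a. (a,a)) ` P" unfolding D_def by auto
  moreover have "finite D" using fin by (rule_tac finite_subset[of D "P \<times> P"]) (auto simp: D_def)
  ultimately have "card (P \<times> P) \<le> card (D \<union> (\<lambda>a. (a,a)) ` P)" using fin
    by (intro card_mono) auto
  also have "\<dots> \<le> card D + card ((\<lambda>a. (a,a)) ` P)" by (rule card_Un_le)
  also have "\<dots> \<le> card D + card P" using card_image_le[OF fin, of "\<lambda>a. (a,a)"] by simp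
  finally have "card P * card P \<le> card D + card P" by (simp add: card_cartesian_product)
  moreover have "card P > 0" using fin ne by auto
  ultimately show False using s1 cD by linarith
qed

definition wsel :: "nat set \<Rightarrow> (nat\<times>nat) set \<Rightarrow> nat" where
  "wsel P W = (SOME w. w \<in> P \<and> card P \<le> 2 * card (vic P W w) + 1)"
definition vsel :: "nat set \<Rightarrow> (nat\<times>nat) set \<Rightarrow> nat set" where
  "vsel P W = (SOME V. V \<subseteq> vic P W (wsel P W) \<and> card V = card P div 2)"

lemma sel_props:
  assumes fin: "finite P" and ne: "P \<noteq> {}" and comp: "\<forall>a\<in>P. \<forall>b\<in>P. a \<noteq> b \<longrightarrow> (a,b)\<in>W \<or> (b,a)\<in>W"
  shows "wsel P W \<in> P" "vsel P W \<subseteq> vic P W (wsel P W)" "card (vsel P W) = card P div 2"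
proof -
  have ex: "\<exists>w. w \<in> P \<and> card P \<le> 2 * card (vic P W w) + 1" using tournament[OF assms] by blast
  have w: "wsel P W \<in> P \<and> card P \<le> 2 * card (vic P W (wsel P W)) + 1"
    unfolding wsel_def by (rule someI_ex[OF ex])
  then have "card P div 2 \<le> card (vic P W (wsel P W))" by linarith
  then obtain T where "T \<subseteq> vic P W (wsel P W)" "card T = card P div 2" by (metis obtain_subset_with_card_n)
  then have "vsel P W \<subseteq> vic P W (wsel P W) \<and> card (vsel P W) = card P div 2"
    unfolding vsel_def by (rule_tac someI[of _ T]) auto
  then show "wsel P W \<in> P" "vsel P W \<subseteq> vic P W (wsel P W)" "card (vsel P W) = card P div 2" using w by auto
qed

primrec go :: "nat \<Rightarrow> nat \<Rightarrow> nat \<Rightarrow> nat set \<Rightarrow> nat set \<Rightarrow> nat set \<Rightarrow> (nat\<times>nat) set \<Rightarrow> dtree" where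
  "go s q 0 P Rs K W = Leaf (K \<union> P \<union> Rs)"
| "go s q (Suc f) P Rs K W =
    (if card K + card P + card Rs \<le> s then Leaf (K \<union> P \<union> Rs)
     else if Rs \<noteq> {} \<and> card P < q then
       addcmp (Min Rs) (sorted_list_of_set P) W (\<lambda>W'. go s q f (insert (Min Rs) P) (Rs - {Min Rs}) K W')
     else if P = {} then Leaf (K \<union> P \<union> Rs)
     else go s q f (P - insert (wsel P W) (vsel P W)) Rs (insert (wsel P W) K) W)"

lemma go_wf: "P \<subseteq> {..<n} \<Longrightarrow> Rs \<subseteq> {..<n} \<Longrightarrow> wf_tree n (go s q f P Rs K W)"
proof (induction f arbitrary: P Rs K W)
  case 0 then show ?case by simp
next
  case (Suc f)
  have fin: "finite P" "finite Rs" using Suc.prems finite_subset by blast+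
  have e: "wf_tree n (go s q f (P - insert (wsel P W) (vsel P W)) Rs (insert (wsel P W) K) W)"
    using Suc.IH[of "P - insert (wsel P W) (vsel P W)" Rs] Suc.prems by blast
  have a: "wf_tree n (addcmp (Min Rs) (sorted_list_of_set P) W (\<lambda>W'. go s q f (insert (Min Rs) P) (Rs - {Min Rs}) K W'))"
    if "Rs \<noteq> {}"
  proof -
    have "Min Rs \<in> Rs" using that fin by simp
    then have m: "Min Rs < n" using Suc.prems by auto
    moreover have "set (sorted_list_of_set P) \<subseteq> {..<n}" using fin Suc.prems by simp
    moreover have "insert (Min Rs) P \<subseteq> {..<n}" "Rs - {Min Rs} \<subseteq> {..<n}"
      using Suc.prems m by auto
    moreover have "\<forall>W'. wf_tree n (go s q f (insert (Min Rs) P) (Rs - {Min Rs}) K W')"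
      using Suc.IH calculation(3,4) by blast
    ultimately show ?thesis by (intro addcmp_wf) auto
  qed
  show ?case using e a by (cases "Rs = {}") simp_all
qed


lemma leaf_props:
  fixes x :: "nat \<Rightarrow> real"
  assumes "(S,c) \<in> runs x (Leaf (K \<union> P \<union> Rs))"
    and "P \<subseteq> {..<n}" "Rs \<subseteq> {..<n}" "K \<subseteq> {..<n}"
    and cov: "\<forall>i<n. i \<in> K \<union> P \<union> Rs \<or> (\<exists>w\<in>K. x i - x w \<le> 1)"
  shows "S \<subseteq> {..<n} \<and> (\<forall>i<n. i \<in> S \<or> (\<exists>w\<in>S. x i - x w \<le> 1)) \<and> c = 0 \<and> card S \<le> card K + card P + card Rs"
proof -
  have S: "S = K \<union> P \<union> Rs" "c = 0" using assms(1) by auto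
  have "card S \<le> card (K \<union> P) + card Rs" unfolding S by (rule card_Un_le)
  moreover have "card (K \<union> P) \<le> card K + card P" by (rule card_Un_le)
  ultimately show ?thesis using S assms(2-4) cov by auto
qed

lemma go_runs:
  fixes x :: "nat \<Rightarrow> real"
  assumes "(S,c) \<in> runs x (go s q f P Rs K W)"
    and "P \<subseteq> {..<n}" "Rs \<subseteq> {..<n}" "K \<subseteq> {..<n}"
    and "P \<inter> Rs = {}" "K \<inter> P = {}" "K \<inter> Rs = {}"
    and "\<forall>(a,b)\<in>W. x b - x a \<le> 1"
    and "\<forall>a\<in>P. \<forall>b\<in>P. a \<noteq> b \<longrightarrow> (a,b)\<in>W \<or> (b,a)\<in>W"
    and "\<forall>i<n. i \<in> K \<union> P \<union> Rs \<or> (\<exists>w\<in>K. x i - x w \<le> 1)"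
    and "card P \<le> q" "1 \<le> q"
  shows "S \<subseteq> {..<n} \<and> (\<forall>i<n. i \<in> S \<or> (\<exists>w\<in>S. x i - x w \<le> 1)) \<and> c \<le> (q-1) * card Rs
     \<and> (2 * card Rs + card P < f \<longrightarrow> card S \<le> simb s q (card K) (card P) (card Rs))"
  using assms
proof (induction f arbitrary: P Rs K W S c)
  case 0
  then show ?case using leaf_props[of S c x K P Rs n] by auto
next
  case (Suc f)
  note run = Suc.prems(1)
  note sub = Suc.prems(2-4)
  note disj = Suc.prems(5-7)
  note adm = Suc.prems(8)
  note comp = Suc.prems(9)
  note cov = Suc.prems(10)
  note pq = Suc.prems(11)
  note q1 = Suc.prems(12)
  have fin: "finite P" "finite Rs" "finite K" using sub finite_subset by blast+
  show ?case
  proof (cases "card K + card P + card Rs \<le> s")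
    case True
    then have "(S,c) \<in> runs x (Leaf (K \<union> P \<union> Rs))" using run by simp
    from leaf_props[OF this sub cov] True show ?thesis by (subst simb.simps) auto
  next
    case A: False
    show ?thesis
    proof (cases "Rs \<noteq> {} \<and> card P < q")
      case B: True
      define y where "y = Min Rs"
      have y: "y \<in> Rs" unfolding y_def using B fin by simp
      have "(S,c) \<in> runs x (addcmp y (sorted_list_of_set P) W (\<lambda>W'. go s q f (insert y P) (Rs - {y}) K W'))"
        using run A B unfolding y_def by simp
      from addcmp_runs[OF this] obtain W' c' where
        c: "c = c' + length (sorted_list_of_set P)" and run': "(S,c') \<in> runs x (go s q f (insert y P) (Rs - {y}) K W')"
        and WW: "W \<subseteq> W'" and adm': "\<forall>(a,b)\<in>W'. (a,b) \<in> W \<or> x b - x a \<le> 1"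
        and new: "\<forall>z\<in>set (sorted_list_of_set P). (y,z)\<in>W' \<or> (z,y)\<in>W'" by blast
      have lenP: "length (sorted_list_of_set P) = card P" by simp
      have setP: "set (sorted_list_of_set P) = P" using fin by simp
      have yP: "y \<notin> P" using y disj by auto
      have IH: "S \<subseteq> {..<n} \<and> (\<forall>i<n. i \<in> S \<or> (\<exists>w\<in>S. x i - x w \<le> 1)) \<and> c' \<le> (q-1) * card (Rs - {y})
         \<and> (2 * card (Rs - {y}) + card (insert y P) < f \<longrightarrow> card S \<le> simb s q (card K) (card (insert y P)) (card (Rs - {y})))"
      proof (rule Suc.IH[OF run'])
        show "insert y P \<subseteq> {..<n}" "Rs - {y} \<subseteq> {..<n}" "K \<subseteq> {..<n}" using sub y by auto
        show "insert y P \<inter> (Rs - {y}) = {}" "K \<inter> insert y P = {}" "K \<inter> (Rs - {y}) = {}" using disj y by auto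
        show "\<forall>(a,b)\<in>W'. x b - x a \<le> 1" using adm adm' by auto
        show "\<forall>a\<in>insert y P. \<forall>b\<in>insert y P. a \<noteq> b \<longrightarrow> (a,b)\<in>W' \<or> (b,a)\<in>W'"
          using comp new WW setP by blast
        show "\<forall>i<n. i \<in> K \<union> insert y P \<union> (Rs - {y}) \<or> (\<exists>w\<in>K. x i - x w \<le> 1)" using cov y by auto
        show "card (insert y P) \<le> q" using B yP fin by simp
        show "1 \<le> q" by (rule q1)
      qed
      have cR: "card (Rs - {y}) = card Rs - 1" "card (insert y P) = card P + 1" using y yP fin by auto
      have r0: "card Rs > 0" using y fin card_gt_0_iff by blast
      have cost: "c \<le> (q-1) * card Rs"
      proof -
        have "c' \<le> (q-1) * (card Rs - 1)" using IH cR by simp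
        moreover have "card P \<le> q - 1" using B by linarith
        ultimately have "c' + card P \<le> (q-1) * (card Rs - 1) + (q-1)" by simp
        also have "\<dots> = (q-1) * (card Rs - 1 + 1)" by (simp only: distrib_left mult_1_right)
        also have "\<dots> = (q-1) * card Rs" using r0 by simp
        finally show ?thesis using c lenP by simp
      qed
      have "2 * card Rs + card P < Suc f \<longrightarrow> card S \<le> simb s q (card K) (card P) (card Rs)"
      proof
        assume "2 * card Rs + card P < Suc f"
        then have "2 * card (Rs - {y}) + card (insert y P) < f" using cR r0 by simp
        then have "card S \<le> simb s q (card K) (card P + 1) (card Rs - 1)" using IH cR by simp
        also have "\<dots> = simb s q (card K) (card P) (card Rs)"
          by (rule simb_step) (use A B r0 in auto)
        finally show "card S \<le> simb s q (card K) (card P) (card Rs)" .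
      qed
      then show ?thesis using IH cost by blast
    next
      case B: False
      show ?thesis
      proof (cases "P = {}")
        case True
        then have "(S,c) \<in> runs x (Leaf (K \<union> P \<union> Rs))" using run A B True q1 by auto
        from leaf_props[OF this sub cov] show ?thesis using A B True fin
          by (subst simb.simps) (auto simp: card_gt_0_iff)
      next
        case C: False
        define w where "w = wsel P W"
        define V where "V = vsel P W"
        have wP: "w \<in> P" and Vv: "V \<subseteq> vic P W w" and cV: "card V = card P div 2"
          using sel_props[OF fin(1) C comp] unfolding w_def V_def by auto
        have VP: "V \<subseteq> P - {w}" using Vv unfolding vic_def by auto
        have run': "(S,c) \<in> runs x (go s q f (P - insert w V) Rs (insert w K) W)"
          using run A B C unfolding w_def V_def by simp
        have wK: "w \<notin> K" using wP disj by auto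
        have IH: "S \<subseteq> {..<n} \<and> (\<forall>i<n. i \<in> S \<or> (\<exists>w\<in>S. x i - x w \<le> 1)) \<and> c \<le> (q-1) * card Rs
         \<and> (2 * card Rs + card (P - insert w V) < f \<longrightarrow> card S \<le> simb s q (card (insert w K)) (card (P - insert w V)) (card Rs))"
        proof (rule Suc.IH[OF run'])
          show "P - insert w V \<subseteq> {..<n}" "Rs \<subseteq> {..<n}" "insert w K \<subseteq> {..<n}" using sub wP by auto
          show "(P - insert w V) \<inter> Rs = {}" "insert w K \<inter> (P - insert w V) = {}" "insert w K \<inter> Rs = {}" using disj wP by auto
          show "\<forall>(a,b)\<in>W. x b - x a \<le> 1" by (rule adm)
          show "\<forall>a\<in>P - insert w V. \<forall>b\<in>P - insert w V. a \<noteq> b \<longrightarrow> (a,b)\<in>W \<or> (b,a)\<in>W" using comp by blast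
          show "\<forall>i<n. i \<in> insert w K \<union> (P - insert w V) \<union> Rs \<or> (\<exists>v\<in>insert w K. x i - x v \<le> 1)"
          proof (intro allI impI)
            fix i assume "i < n"
            show "i \<in> insert w K \<union> (P - insert w V) \<union> Rs \<or> (\<exists>v\<in>insert w K. x i - x v \<le> 1)"
            proof (cases "i \<in> V")
              case True
              then have "(w,i) \<in> W" using Vv unfolding vic_def by auto
              then have "x i - x w \<le> 1" using adm by auto
              then show ?thesis by blast
            next
              case False
              then show ?thesis using cov \<open>i<n\<close> by blast
            qed
          qed
          show "card (P - insert w V) \<le> q" using pq fin by (meson card_mono Diff_subset le_trans)
          show "1 \<le> q" by (rule q1)
        qed
        have finV: "finite V" using VP fin finite_subset by blast
        have cP: "card (P - insert w V) = card P - 1 - card P div 2"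
        proof -
          have "insert w V \<subseteq> P" using wP VP by auto
          then have "card (P - insert w V) = card P - card (insert w V)" using finV by (simp add: card_Diff_subset)
          moreover have "card (insert w V) = card V + 1" using VP finV by (subst card_insert_disjoint) auto
          ultimately show ?thesis using cV by simp
        qed
        have p0: "card P > 0" using C fin card_gt_0_iff by blast
        have "2 * card Rs + card P < Suc f \<longrightarrow> card S \<le> simb s q (card K) (card P) (card Rs)"
        proof
          assume "2 * card Rs + card P < Suc f"
          then have "2 * card Rs + card (P - insert w V) < f" using cP p0 by simp
          then have "card S \<le> simb s q (card K + 1) (card P - 1 - card P div 2) (card Rs)"
            using IH cP wK fin by simp
          also have "\<dots> = simb s q (card K) (card P) (card Rs)"
            using A B p0 fin by (subst (2) simb.simps) (auto simp: card_gt_0_iff)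
          finally show "card S \<le> simb s q (card K) (card P) (card Rs)" .
        qed
        then show ?thesis using IH by blast
      qed
    qed
  qed
qed


definition isq :: "nat \<Rightarrow> nat" where "isq n = nat \<lfloor>sqrt (real n)\<rfloor>"

lemma isq_props: "isq n * isq n \<le> n \<and> n < (isq n + 1) * (isq n + 1) \<and> real (isq n) \<le> sqrt (real n)"
proof -
  define y where "y = sqrt (real n)"
  have y0: "0 \<le> y" unfolding y_def by simp
  have eq: "real (isq n) = of_int \<lfloor>y\<rfloor>" unfolding isq_def y_def by simp
  have le: "real (isq n) \<le> y" using eq of_int_floor_le[of y] by linarith
  have lt: "y < real (isq n) + 1" using eq by linarith
  have yy: "y * y = real n" unfolding y_def by (simp add: real_sqrt_mult_self)
  have "real (isq n) * real (isq n) \<le> y * y" using le by (intro mult_mono) auto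
  then have a: "isq n * isq n \<le> n" using yy by (simp flip: of_nat_mult)
  have "y * y < (real (isq n) + 1) * (real (isq n) + 1)" using lt y0 by (intro mult_strict_mono) auto
  then have "real n < real ((isq n + 1) * (isq n + 1))" using yy by (simp add: algebra_simps)
  then have b: "n < (isq n + 1) * (isq n + 1)" by (simp only: of_nat_less_iff)
  show ?thesis using a b le y_def by simp
qed

definition alg :: "nat \<Rightarrow> dtree" where
  "alg n = go (isq n) (3 * isq n + 1) (2*n+1) {} {..<n} {} {}"

theorem mainTheorem5:
  shows "\<exists>alg :: nat \<Rightarrow> dtree. \<forall>n \<ge> 81. wf_tree n (alg n) \<and>
           (\<forall>x :: nat \<Rightarrow> real. \<forall>(S, k) \<in> runs x (alg n).
              real k \<le> 3 * real n powr (3/2) \<and>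
              is_max_set 1 n x S \<and> real (card S) \<le> sqrt (real n))"
proof (intro exI[of _ alg] allI impI conjI ballI)
  fix n :: nat assume n81: "81 \<le> n"
  show "wf_tree n (alg n)" unfolding alg_def by (rule go_wf) auto
  fix x :: "nat \<Rightarrow> real" and p assume "p \<in> runs x (alg n)"
  then obtain S k where p: "p = (S,k)" and run: "(S,k) \<in> runs x (alg n)" by (cases p) auto
  define s where "s = isq n"
  have sp: "s * s \<le> n" "n < (s+1)*(s+1)" "real s \<le> sqrt (real n)" using isq_props[of n] unfolding s_def by auto
  have G: "S \<subseteq> {..<n} \<and> (\<forall>i<n. i \<in> S \<or> (\<exists>w\<in>S. x i - x w \<le> 1)) \<and> k \<le> (3*s+1-1) * card {..<n::nat}
     \<and> (2 * card {..<n::nat} + card ({}::nat set) < 2*n+1 \<longrightarrow> card S \<le> simb s (3*s+1) (card ({}::nat set)) (card ({}::nat set)) (card {..<n::nat}))"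
    by (rule go_runs[where W="{}"]) (use run in \<open>auto simp: alg_def s_def\<close>)
  have cS: "card S \<le> s" using G simb_all[OF n81 sp(1) sp(2)] by simp
  have k: "k \<le> 3 * s * n" using G by simp
  have pw: "real n powr (3/2) = real n * sqrt (real n)"
  proof -
    have "real n powr (3/2) = real n powr (1 + 1/2)" by simp
    also have "\<dots> = real n powr 1 * real n powr (1/2)" by (rule powr_add)
    also have "\<dots> = real n * sqrt (real n)" by (simp add: powr_half_sqrt)
    finally show ?thesis .
  qed
  have "real k \<le> real (3 * s * n)" using k by (simp only: of_nat_le_iff)
  also have "\<dots> = 3 * real s * real n" by simp
  also have "\<dots> \<le> 3 * sqrt (real n) * real n" using sp(3) by (intro mult_right_mono) auto
  finally have kk: "real k \<le> 3 * real n powr (3/2)" using pw by (simp add: algebra_simps)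
  have "real (card S) \<le> sqrt (real n)" using cS sp(3) by linarith
  moreover have "is_max_set 1 n x S"
  proof -
    have "0 \<in> {..<n}" using n81 by simp
    then have fin: "finite (x ` {..<n})" "x ` {..<n} \<noteq> {}" by auto
    obtain m where m: "m < n" "x m = max_val n x" unfolding max_val_def using Max_in[OF fin] by auto
    have "\<exists>i\<in>S. x i \<ge> max_val n x - 1"
    proof (cases "m \<in> S")
      case True then show ?thesis using m by (intro bexI[of _ m]) auto
    next
      case False
      then obtain w where "w \<in> S" "x m - x w \<le> 1" using G m by blast
      then show ?thesis using m by (intro bexI[of _ w]) auto
    qed
    then show ?thesis unfolding is_max_set_def using G by blast
  qed
  ultimately show "case p of (S, k) \<Rightarrow> real k \<le> 3 * real n powr (3/2) \<and> is_max_set 1 n x S \<and> real (card S) \<le> sqrt (real n)"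
    using p kk by simp
qed


end
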